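(* Let $H(u,v,z,t)=\sum_w u^{\mathrm{asc}(w)}v^{\mathrm{last}(w)}z^{\mathrm{zeros}(w)}t^{\mathrm{length}(w)}$, summed over all nonempty ascent sequences $w$. For $s\ge1$ put $\delta_s=u-(1-t)^s(u-1)$ and $\gamma_s=u-(1-zt)(1-t)^{s-1}(u-1)$, and $\delta_0=1$. Then, as formal power series in $u,z,t$, $$H(u,1,z,t)=\sum_{s\ge0}\frac{zt(1-u)u^s(1-t)^s}{\delta_s\prod_{i=1}^{s+1}\gamma_i}.$$
   Context: An ascent sequence of length $n$ is a sequence $(x_1,\dots,x_n)$ of nonnegative integers with $x_1=0$ and $x_i\in[0,1+\mathrm{asc}(x_1,\dots,x_{i-1})]$ for $2\le i\le n$, where $\mathrm{asc}(y_1,\dots,y_k)=|\{1\le j<k: y_j<y_{j+1}\}|$. For an ascent sequence $w$: $\mathrm{length}(w)$ is its number of entries, $\mathrm{asc}(w)$ its number of ascents, $\mathrm{last}(w)$ its rightmost entry, $\mathrm{zeros}(w)$ its number of entries equal to 0. Each $\delta_s,\gamma_s$ has constant term 1, so the quotients are formal power series, and the $s$-th summand is divisible by $u^s$, so the sum converges formally. *)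

theory Defs
  imports "HOL-Computational_Algebra.Formal_Power_Series"
begin

(* Ascent sequences are lists of naturals; list position i (0-based) holds x_{i+1}. *)

definition asc :: "nat list \<Rightarrow> nat" where
  "asc w = card {j. j + 1 < length w \<and> w ! j < w ! (j + 1)}"

definition zeros :: "nat list \<Rightarrow> nat" where
  "zeros w = card {j. j < length w \<and> w ! j = 0}"

definition is_ascent_seq :: "nat list \<Rightarrow> bool" where
  "is_ascent_seq w \<longleftrightarrow> w \<noteq> [] \<and> w ! 0 = 0 \<and>
     (\<forall>i. 1 \<le> i \<and> i < length w \<longrightarrow> w ! i \<le> 1 + asc (take i w))"

(* Trivariate formal power series in u, z, t with rational coefficients, realised as
   nested univariate series: the outer variable is u, the middle one z, the inner one t. *)
type_synonym fps3 = "rat fps fps fps"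

definition varU :: fps3 where "varU = fps_X"
definition varZ :: fps3 where "varZ = fps_const fps_X"
definition varT :: fps3 where "varT = fps_const (fps_const fps_X)"

definition H_v1 :: fps3 where
  "H_v1 = Abs_fps (\<lambda>a. Abs_fps (\<lambda>b. Abs_fps (\<lambda>n.
     of_nat (card {w. is_ascent_seq w \<and> length w = n \<and> asc w = a \<and> zeros w = b}))))"

definition delta :: "nat \<Rightarrow> fps3" where
  "delta s = (if s = 0 then 1 else varU - (1 - varT) ^ s * (varU - 1))"

definition gamma :: "nat \<Rightarrow> fps3" where
  "gamma s = varU - (1 - varZ * varT) * (1 - varT) ^ (s - 1) * (varU - 1)"

end

theory Submission
  imports Defs
begin

unbundle fps_syntax



lemma inv1: fixes f :: "'a::{comm_ring_1,inverse} fps"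
  assumes "f $ 0 * inverse (f $ 0) = 1" shows "f * inverse f = 1"
  using fps_right_inverse[of f "inverse (f $ 0)"] assms by (simp add: fps_inverse_def)
lemma unit3: fixes D :: fps3 assumes "D $ 0 $ 0 $ 0 \<noteq> 0" shows "D * inverse D = 1"
proof -
  have a: "D $ 0 $ 0 * inverse (D $ 0 $ 0) = 1" by (rule inv1) (simp add: assms)
  have b: "D $ 0 * inverse (D $ 0) = 1" by (rule inv1[OF a])
  show ?thesis by (rule inv1[OF b])
qed

lemma geoA:
  fixes U T Z y :: "'a::comm_ring_1"
  assumes y: "y * (1 - T*(1-U)) = 1"
  shows "(1-U)*T*(\<Sum>x\<le>l. (if x=0 then Z else y^x)) = T*Z*(1-U) + y^l - 1"
proof (induction l)
  case 0 then show ?case by (simp add: algebra_simps)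
next
  case (Suc l)
  have e: "(1-U)*T*y^Suc l = y^Suc l - y^l"
  proof -
    have "y^Suc l - y^l = y^l * (y - 1)" by (simp add: algebra_simps)
    also have "y - 1 = (1-U)*T*y" using y by (simp add: algebra_simps)
    finally show ?thesis by (simp add: algebra_simps)
  qed
  have "(1-U)*T*(\<Sum>x\<le>Suc l. (if x=0 then Z else y^x)) = (1-U)*T*(\<Sum>x\<le>l. (if x=0 then Z else y^x)) + (1-U)*T*y^Suc l"
    by (simp add: algebra_simps)
  also have "\<dots> = T*Z*(1-U) + y^l - 1 + (y^Suc l - y^l)" using Suc.IH e by simp
  also have "\<dots> = T*Z*(1-U) + y^Suc l - 1" by (simp add: algebra_simps)
  finally show ?case .
qed

lemma geoB:
  fixes U T Z y :: "'a::comm_ring_1"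
  assumes y: "y * (1 - T*(1-U)) = 1" and lm: "l \<le> m"
  shows "(1-U)*T*(\<Sum>x\<le>m. (if x=0 then Z else if x \<le> l then y^x else U*y^x))
     = (1-U)*y^l - 1 + U*y^m + T*Z*(1-U)"
  using lm
proof (induction m)
  case 0 then show ?case by (simp add: algebra_simps)
next
  case (Suc m)
  have e: "(1-U)*T*y^Suc m = y^Suc m - y^m"
  proof -
    have "y^Suc m - y^m = y^m * (y - 1)" by (simp add: algebra_simps)
    also have "y - 1 = (1-U)*T*y" using y by (simp add: algebra_simps)
    finally show ?thesis by (simp add: algebra_simps)
  qed
  show ?case
  proof (cases "l = Suc m")
    case True
    have "(\<Sum>x\<le>Suc m. (if x=0 then Z else if x \<le> l then y^x else U*y^x))
        = (\<Sum>x\<le>l. (if x=0 then Z else y^x))" using True by (intro sum.cong) auto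
    then show ?thesis using geoA[OF y, of Z l] True by (simp add: algebra_simps)
  next
    case False
    then have "l \<le> m" using Suc.prems by simp
    let ?f = "\<lambda>x. (if x=0 then Z else if x \<le> l then y^x else U*y^x)"
    have "(1-U)*T*(\<Sum>x\<le>Suc m. ?f x) = (1-U)*T*(\<Sum>x\<le>m. ?f x) + U*((1-U)*T*y^Suc m)"
      using False \<open>l \<le> m\<close> by (simp add: algebra_simps)
    also have "\<dots> = (1-U)*y^l - 1 + U*y^m + T*Z*(1-U) + U*(y^Suc m - y^m)"
      using Suc.IH[OF \<open>l \<le> m\<close>] e by simp
    also have "\<dots> = (1-U)*y^l - 1 + U*y^Suc m + T*Z*(1-U)" by (simp add: algebra_simps)
    finally show ?thesis .
  qed
qed



lemma asc_bound: "asc w \<le> length w"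
proof -
  have "{j. j + 1 < length w \<and> w ! j < w ! (j + 1)} \<subseteq> {..<length w}" by auto
  then show ?thesis unfolding asc_def using card_mono[of "{..<length w}"] by fastforce
qed

lemma asc_snoc: assumes "w \<noteq> []" shows "asc (w@[x]) = asc w + (if last w < x then 1 else 0)"
proof -
  let ?A = "{j. j + 1 < length w \<and> w ! j < w ! (j + 1)}"
  let ?B = "(if last w < x then {length w - 1} else {})"
  have eq: "{j. j + 1 < length (w@[x]) \<and> (w@[x]) ! j < (w@[x]) ! (j + 1)} = ?A \<union> ?B"
  proof (rule set_eqI)
    fix j
    show "j \<in> {j. j + 1 < length (w@[x]) \<and> (w@[x]) ! j < (w@[x]) ! (j + 1)} \<longleftrightarrow> j \<in> ?A \<union> ?B"
    proof (cases "j + 1 < length w")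
      case True then show ?thesis by (auto simp: nth_append)
    next
      case False
      then show ?thesis using assms by (cases "j = length w - 1") (auto simp: nth_append last_conv_nth)
    qed
  qed
  have fA: "finite ?A" by (rule finite_subset[of _ "{..<length w}"]) auto
  have d: "?A \<inter> ?B = {}" by auto
  show ?thesis unfolding asc_def eq using card_Un_disjoint[OF fA _ d] by auto
qed

lemma zeros_snoc: "zeros (w@[x]) = zeros w + (if x = 0 then 1 else 0)"
proof -
  let ?A = "{j. j < length w \<and> w ! j = 0}"
  let ?B = "(if x = 0 then {length w} else {})"
  have eq: "{j. j < length (w@[x]) \<and> (w@[x]) ! j = 0} = ?A \<union> ?B"
    by (auto simp: nth_append less_Suc_eq)
  have fA: "finite ?A" by (rule finite_subset[of _ "{..<length w}"]) auto
  have d: "?A \<inter> ?B = {}" by auto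
  show ?thesis unfolding zeros_def eq using card_Un_disjoint[OF fA _ d] by auto
qed

lemma asc_single[simp]: "asc [x] = 0" by (simp add: asc_def)
lemma zeros_single0[simp]: "zeros [0] = 1"
proof -
  have "{j. j < length [0::nat] \<and> [0::nat] ! j = 0} = {0}" by auto
  then show ?thesis by (simp add: zeros_def)
qed

lemma seq_single[simp]: "is_ascent_seq [x] \<longleftrightarrow> x = 0"
  by (simp add: is_ascent_seq_def)

lemma seq_snoc: assumes "w \<noteq> []"
  shows "is_ascent_seq (w@[x]) \<longleftrightarrow> is_ascent_seq w \<and> x \<le> 1 + asc w"
proof -
  have h0: "(w@[x]) ! 0 = w ! 0" using assms by (simp add: nth_append)
  have "(\<forall>i. 1 \<le> i \<and> i < length (w@[x]) \<longrightarrow> (w@[x]) ! i \<le> 1 + asc (take i (w@[x])))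
     \<longleftrightarrow> (\<forall>i. 1 \<le> i \<and> i < length w \<longrightarrow> w ! i \<le> 1 + asc (take i w)) \<and> x \<le> 1 + asc w"
  proof
    assume a: "\<forall>i. 1 \<le> i \<and> i < length (w@[x]) \<longrightarrow> (w@[x]) ! i \<le> 1 + asc (take i (w@[x]))"
    have "x \<le> 1 + asc w" using a[rule_format, of "length w"] assms
      by (simp add: Suc_leI)
    moreover have "\<forall>i. 1 \<le> i \<and> i < length w \<longrightarrow> w ! i \<le> 1 + asc (take i w)"
    proof (intro allI impI)
      fix i assume i: "1 \<le> i \<and> i < length w"
      then show "w ! i \<le> 1 + asc (take i w)" using a[rule_format, of i] by (simp add: nth_append)
    qed
    ultimately show "(\<forall>i. 1 \<le> i \<and> i < length w \<longrightarrow> w ! i \<le> 1 + asc (take i w)) \<and> x \<le> 1 + asc w" by blast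
  next
    assume a: "(\<forall>i. 1 \<le> i \<and> i < length w \<longrightarrow> w ! i \<le> 1 + asc (take i w)) \<and> x \<le> 1 + asc w"
    show "\<forall>i. 1 \<le> i \<and> i < length (w@[x]) \<longrightarrow> (w@[x]) ! i \<le> 1 + asc (take i (w@[x]))"
    proof (intro allI impI)
      fix i assume i: "1 \<le> i \<and> i < length (w@[x])"
      show "(w@[x]) ! i \<le> 1 + asc (take i (w@[x]))"
      proof (cases "i < length w")
        case True then show ?thesis using a i by (simp add: nth_append)
      next
        case False
        then have "i = length w" using i by simp
        then show ?thesis using a by (simp add: nth_append)
      qed
    qed
  qed
  then show ?thesis using assms h0 unfolding is_ascent_seq_def by auto
qed

lemma last_le_asc: "is_ascent_seq w \<Longrightarrow> last w \<le> asc w"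
proof (induction w rule: rev_induct)
  case Nil then show ?case by (simp add: is_ascent_seq_def)
next
  case (snoc x v)
  show ?case
  proof (cases "v = []")
    case True then show ?thesis using snoc.prems by simp
  next
    case False
    then have s: "is_ascent_seq v" "x \<le> 1 + asc v" using snoc.prems seq_snoc by auto
    then show ?thesis using snoc.IH[OF s(1)] asc_snoc[OF False, of x] by auto
  qed
qed

definition V :: "nat \<Rightarrow> nat list set" where "V N = {w. is_ascent_seq w \<and> length w \<le> N}"

lemma V0: "V 0 = {}" by (auto simp: V_def is_ascent_seq_def)

lemma V_Suc: "V (Suc N) = insert [0] ((\<lambda>(w,x). w@[x]) ` (SIGMA w:V N. {..Suc (asc w)}))"
proof (rule set_eqI)
  fix v
  show "v \<in> V (Suc N) \<longleftrightarrow> v \<in> insert [0] ((\<lambda>(w,x). w@[x]) ` (SIGMA w:V N. {..Suc (asc w)}))"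
  proof
    assume v: "v \<in> V (Suc N)"
    then have ne: "v \<noteq> []" by (auto simp: V_def is_ascent_seq_def)
    show "v \<in> insert [0] ((\<lambda>(w,x). w@[x]) ` (SIGMA w:V N. {..Suc (asc w)}))"
    proof (cases "butlast v = []")
      case True
      then have "v = [last v]" using ne append_butlast_last_id[OF ne] by simp
      then have "v = [0]" using v by (auto simp: V_def) (metis seq_single)
      then show ?thesis by simp
    next
      case False
      have vv: "v = butlast v @ [last v]" using ne by simp
      then have "is_ascent_seq (butlast v @ [last v])" using v by (simp add: V_def)
      then have s: "is_ascent_seq (butlast v)" "last v \<le> 1 + asc (butlast v)"
        using seq_snoc[OF False] by auto
      have "butlast v \<in> V N" using s v by (auto simp: V_def)
      then have "(butlast v, last v) \<in> (SIGMA w:V N. {..Suc (asc w)})" using s by auto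
      then show ?thesis using vv by (metis (no_types, lifting) case_prod_conv image_eqI insertI2)
    qed
  next
    assume "v \<in> insert [0] ((\<lambda>(w,x). w@[x]) ` (SIGMA w:V N. {..Suc (asc w)}))"
    then show "v \<in> V (Suc N)"
    proof
      assume "v = [0]" then show ?thesis by (simp add: V_def)
    next
      assume "v \<in> (\<lambda>(w,x). w@[x]) ` (SIGMA w:V N. {..Suc (asc w)})"
      then obtain w x where w: "w \<in> V N" "x \<le> Suc (asc w)" and vd: "v = w@[x]" by auto
      then have ne: "w \<noteq> []" by (auto simp: V_def is_ascent_seq_def)
      show ?thesis using w seq_snoc[OF ne, of x] by (auto simp: V_def vd)
    qed
  qed
qed

lemma V_finite: "finite (V N)"
  by (induction N) (auto simp: V0 V_Suc)

lemma sum_V_Suc: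
  fixes F :: "nat list \<Rightarrow> 'a::comm_monoid_add"
  shows "(\<Sum>w\<in>V (Suc N). F w) = F [0] + (\<Sum>w\<in>V N. \<Sum>x\<le>Suc (asc w). F (w@[x]))"
proof -
  have inj: "inj_on (\<lambda>(w,x). w@[x]) (SIGMA w:V N. {..Suc (asc w)})"
    by (auto simp: inj_on_def)
  have nin: "[0] \<notin> (\<lambda>(w,x). w@[x]) ` (SIGMA w:V N. {..Suc (asc w)})"
    by (auto simp: V_def is_ascent_seq_def)
  have fin: "finite ((\<lambda>(w,x). w@[x]) ` (SIGMA w:V N. {..Suc (asc w)}))"
    using V_finite by auto
  have "(\<Sum>w\<in>V (Suc N). F w) = F [0] + (\<Sum>w\<in>(\<lambda>(w,x). w@[x]) ` (SIGMA w:V N. {..Suc (asc w)}). F w)"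
    unfolding V_Suc using sum.insert[OF fin nin] by simp
  also have "(\<Sum>w\<in>(\<lambda>(w,x). w@[x]) ` (SIGMA w:V N. {..Suc (asc w)}). F w)
     = (\<Sum>p\<in>(SIGMA w:V N. {..Suc (asc w)}). F (fst p @ [snd p]))"
    using sum.reindex[OF inj] by (simp add: case_prod_beta)
  also have "\<dots> = (\<Sum>w\<in>V N. \<Sum>x\<le>Suc (asc w). F (w@[x]))"
    using sum.Sigma[OF V_finite[of N], of "\<lambda>w. {..Suc (asc w)}" "\<lambda>w x. F (w@[x])"] by (simp add: case_prod_beta del: sum.atMost_Suc)
  finally show ?thesis .
qed




lemma varT_pow: "varT ^ N = fps_const (fps_const (fps_X ^ N))"
  by (simp add: varT_def)

lemma varT_pow_mult_nth: "(varT ^ N * R) $ a $ b $ k = (if k < N then 0 else R $ a $ b $ (k - N))"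
  by (simp add: varT_pow fps_X_power_mult_nth)

definition tdvd :: "nat \<Rightarrow> fps3 \<Rightarrow> bool" where "tdvd N X \<longleftrightarrow> (\<exists>R. X = varT ^ N * R)"

lemma tdvd_iff: "tdvd N X \<longleftrightarrow> (\<forall>a b k. k < N \<longrightarrow> X $ a $ b $ k = 0)"
proof
  assume "tdvd N X" then show "\<forall>a b k. k < N \<longrightarrow> X $ a $ b $ k = 0"
    by (auto simp: tdvd_def varT_pow_mult_nth)
next
  assume h: "\<forall>a b k. k < N \<longrightarrow> X $ a $ b $ k = 0"
  define R where "R = Abs_fps (\<lambda>a. Abs_fps (\<lambda>b. Abs_fps (\<lambda>k. X $ a $ b $ (k + N))))"
  have "X = varT ^ N * R"
    by (intro fps_ext) (auto simp: varT_pow_mult_nth R_def h fps_eq_iff)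
  then show "tdvd N X" by (auto simp: tdvd_def)
qed

lemma tdvd_add: "tdvd N X \<Longrightarrow> tdvd N Y \<Longrightarrow> tdvd N (X + Y)"
  unfolding tdvd_def by (metis distrib_left)
lemma tdvd_diff: "tdvd N X \<Longrightarrow> tdvd N Y \<Longrightarrow> tdvd N (X - Y)"
  unfolding tdvd_def by (metis right_diff_distrib)
lemma tdvd_mult: "tdvd N X \<Longrightarrow> tdvd N (Y * X)"
  by (auto simp: tdvd_def mult.left_commute)
lemma tdvd_compose: "tdvd N X \<Longrightarrow> b $ 0 = 0 \<Longrightarrow> tdvd N (X oo b)"
  by (auto simp: tdvd_def fps_compose_mult_distrib varT_pow)
lemma tdvd_all: "(\<And>N. tdvd N X) \<Longrightarrow> X = 0"
  unfolding tdvd_iff by (metis fps_ext fps_zero_nth lessI)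

definition mon :: "nat \<Rightarrow> nat \<Rightarrow> nat \<Rightarrow> fps3" where
  "mon a b n = varU ^ a * varZ ^ b * varT ^ n"

lemma mon_alt: "mon a b n = fps_X ^ a * fps_const (fps_X ^ b * fps_const (fps_X ^ n))"
  by (simp add: mon_def varU_def varZ_def varT_def mult.assoc)

lemma mon_nth: "mon a b n $ i $ j $ k = (if i = a \<and> j = b \<and> k = n then 1 else 0)"
  by (simp add: mon_alt fps_X_power_mult_nth fps_X_power_mult_right_nth mult.commute[of "fps_X ^ b"])





definition Hp :: "nat \<Rightarrow> fps3" where
  "Hp N = (\<Sum>w\<in>V N. mon (asc w) (zeros w) (length w))"
definition G :: "fps3 \<Rightarrow> nat \<Rightarrow> fps3" where
  "G y N = (\<Sum>w\<in>V N. mon (asc w) (zeros w) (length w) * y ^ last w)"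

lemma sum_ind: "finite A \<Longrightarrow> (\<Sum>w\<in>A. if P w then 1 else 0) = (of_nat (card {w\<in>A. P w}) :: 'a::semiring_1)"
  by (simp add: sum.inter_filter[symmetric])

lemma Hp_nth: "Hp N $ a $ b $ k = of_nat (card {w\<in>V N. asc w = a \<and> zeros w = b \<and> length w = k})"
proof -
  have "Hp N $ a $ b $ k = (\<Sum>w\<in>V N. if asc w = a \<and> zeros w = b \<and> length w = k then 1 else 0)"
    unfolding Hp_def by (simp add: fps_sum_nth mon_nth eq_commute)
  also have "\<dots> = of_nat (card {w\<in>V N. asc w = a \<and> zeros w = b \<and> length w = k})" by (rule sum_ind[OF V_finite])
  finally show ?thesis .
qed

lemma H_nth: "H_v1 $ a $ b $ k = of_nat (card {w. is_ascent_seq w \<and> length w = k \<and> asc w = a \<and> zeros w = b})"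
  by (simp add: H_v1_def)

lemma tdvd_H_Hp: "tdvd (Suc N) (H_v1 - Hp N)"
  unfolding tdvd_iff
proof (intro allI impI)
  fix a b k assume "k < Suc N"
  then have "{w\<in>V N. asc w = a \<and> zeros w = b \<and> length w = k} = {w. is_ascent_seq w \<and> length w = k \<and> asc w = a \<and> zeros w = b}"
    by (auto simp: V_def)
  then show "(H_v1 - Hp N) $ a $ b $ k = 0" by (simp add: H_nth Hp_nth)
qed





abbreviation mw :: "nat list \<Rightarrow> fps3" where "mw w \<equiv> mon (asc w) (zeros w) (length w)"

definition yy :: fps3 where "yy = inverse (delta 1)"
definition bb :: fps3 where "bb = varU * yy"

lemma delta1: "delta 1 = 1 - varT*(1-varU)" by (simp add: delta_def algebra_simps)
lemma delta1_0: "delta 1 $ 0 $ 0 $ 0 \<noteq> 0" unfolding delta1 by (simp add: varT_def varU_def)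
lemma yy_inv: "yy * delta 1 = 1" unfolding yy_def using unit3[OF delta1_0] by (simp add: mult.commute)
lemma yy: "yy * (1 - varT*(1-varU)) = 1" using yy_inv unfolding delta1 .
lemma bb0: "bb $ 0 = 0" by (simp add: bb_def varU_def)
lemma gamma1: "gamma 1 = 1 - varT*varZ*(1-varU)" by (simp add: gamma_def algebra_simps)

lemma mon_compose: "mon a c n oo bb = bb^a * varZ^c * varT^n"
proof -
  have zt: "varZ^c * varT^n = fps_const (fps_X ^ c * fps_const (fps_X ^ n))"
    by (simp add: varZ_def varT_def)
  show ?thesis unfolding mon_alt mult.assoc zt
    by (simp add: fps_compose_mult_distrib[OF bb0] fps_compose_power[OF bb0, symmetric] bb0)
qed

lemma Hp_compose: "Hp N oo bb = (\<Sum>w\<in>V N. bb ^ asc w * varZ ^ zeros w * varT ^ length w)"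
  by (simp add: Hp_def fps_compose_sum_distrib mon_compose)

lemma step_word:
  assumes w: "w \<in> V N"
  shows "(1-varU) * (\<Sum>x\<le>Suc (asc w). mw (w@[x]) * yy ^ last (w@[x]))
     = mw w * ((1-varU)*yy^last w - 1 + varU*yy^Suc (asc w) + varT*varZ*(1-varU))"
proof -
  have ne: "w \<noteq> []" and sq: "is_ascent_seq w" using w by (auto simp: V_def is_ascent_seq_def)
  have la: "last w \<le> Suc (asc w)" using last_le_asc[OF sq] by simp
  let ?g = "\<lambda>x. (if x=0 then varZ else if x \<le> last w then yy^x else varU*yy^x)"
  have pt: "mw (w@[x]) * yy ^ last (w@[x]) = mw w * varT * ?g x" for x
    using ne by (auto simp: asc_snoc zeros_snoc mon_def algebra_simps)
  have "(\<Sum>x\<le>Suc (asc w). mw (w@[x]) * yy ^ last (w@[x])) = (\<Sum>x\<le>Suc (asc w). mw w * varT * ?g x)"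
    by (intro sum.cong refl) (rule pt)
  also have "\<dots> = mw w * varT * (\<Sum>x\<le>Suc (asc w). ?g x)" by (rule sum_distrib_left[symmetric])
  finally have "(1-varU) * (\<Sum>x\<le>Suc (asc w). mw (w@[x]) * yy ^ last (w@[x]))
     = mw w * ((1-varU) * varT * (\<Sum>x\<le>Suc (asc w). ?g x))"
    by (simp only: ac_simps)
  also have "\<dots> = mw w * ((1-varU)*yy^last w - 1 + varU*yy^Suc (asc w) + varT*varZ*(1-varU))"
    by (subst geoB[OF yy la]) (rule refl)
  finally show ?thesis .
qed





lemma pt_word: "mw w * ((1-varU)*yy^last w - 1 + varU*yy^Suc (asc w) + varT*varZ*(1-varU))
   = (1-varU)*(mw w * yy^last w) - mw w + bb * (bb ^ asc w * varZ ^ zeros w * varT ^ length w)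
     + varT*varZ*(1-varU) * mw w"
  by (simp add: mon_def bb_def power_mult_distrib algebra_simps)

lemma G_Suc: "(1-varU)*G yy (Suc N) = (1-varU)*(varZ*varT) + (1-varU)*G yy N - Hp N + bb*(Hp N oo bb)
   + varT*varZ*(1-varU)*Hp N"
proof -
  have "G yy (Suc N) = mw [0] * yy ^ last [0] + (\<Sum>w\<in>V N. \<Sum>x\<le>Suc (asc w). mw (w@[x]) * yy ^ last (w@[x]))"
    unfolding G_def by (rule sum_V_Suc)
  also have "mw [0] * yy ^ last [0] = varZ*varT" by (simp add: mon_def)
  finally have "(1-varU)*G yy (Suc N) = (1-varU)*(varZ*varT) +
      (\<Sum>w\<in>V N. (1-varU)*(\<Sum>x\<le>Suc (asc w). mw (w@[x]) * yy ^ last (w@[x])))"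
    by (simp only: distrib_left sum_distrib_left)
  also have "(\<Sum>w\<in>V N. (1-varU)*(\<Sum>x\<le>Suc (asc w). mw (w@[x]) * yy ^ last (w@[x])))
     = (\<Sum>w\<in>V N. (1-varU)*(mw w * yy^last w) - mw w + bb * (bb ^ asc w * varZ ^ zeros w * varT ^ length w)
     + varT*varZ*(1-varU) * mw w)"
    by (intro sum.cong refl) (simp only: step_word pt_word)
  also have "\<dots> = (1-varU)*G yy N - Hp N + bb*(Hp N oo bb) + varT*varZ*(1-varU)*Hp N"
    unfolding Hp_compose by (simp only: G_def Hp_def sum.distrib sum_subtractf sum_distrib_left)
  finally show ?thesis by (simp only: add.assoc diff_add_eq add_diff_eq)
qed

lemma G_diff: "tdvd (Suc N) (G yy (Suc N) - G yy N)"
proof -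
  let ?L = "{w. is_ascent_seq w \<and> length w = Suc N}"
  have un: "V (Suc N) = V N \<union> ?L" unfolding V_def by auto
  have dj: "V N \<inter> ?L = {}" unfolding V_def by force
  have fL: "finite ?L" by (rule finite_subset[OF _ V_finite[of "Suc N"]]) (auto simp: V_def)
  have "G yy (Suc N) = G yy N + (\<Sum>w\<in>?L. mw w * yy ^ last w)"
    unfolding G_def un by (rule sum.union_disjoint[OF V_finite fL dj])
  moreover have "(\<Sum>w\<in>?L. mw w * yy ^ last w) = varT ^ Suc N * (\<Sum>w\<in>?L. varU ^ asc w * varZ ^ zeros w * yy ^ last w)"
    unfolding sum_distrib_left
  proof (intro sum.cong refl)
    fix w assume "w \<in> ?L"
    then have l: "length w = Suc N" by simp
    show "mw w * yy ^ last w = varT ^ Suc N * (varU ^ asc w * varZ ^ zeros w * yy ^ last w)"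
      unfolding mon_def l by (simp only: mult.commute mult.left_commute)
  qed
  ultimately show ?thesis by (auto simp: tdvd_def)
qed

lemma Hp_FE: "Hp N * gamma 1 = varZ*varT*(1-varU) + bb*(Hp N oo bb) - (1-varU)*(G yy (Suc N) - G yy N)"
  using G_Suc[of N] unfolding gamma1 by (simp add: algebra_simps)

lemma H_FE: "H_v1 * gamma 1 = varZ*varT*(1-varU) + bb*(H_v1 oo bb)"
proof -
  let ?E = "H_v1 * gamma 1 - varZ*varT*(1-varU) - bb*(H_v1 oo bb)"
  have "tdvd N ?E" for N
  proof (cases N)
    case 0 then show ?thesis by (simp add: tdvd_def)
  next
    case (Suc M)
    have "?E = gamma 1 * (H_v1 - Hp M) - bb * ((H_v1 - Hp M) oo bb) - (1-varU)*(G yy (Suc M) - G yy M)"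
      using Hp_FE[of M] by (simp add: fps_compose_sub_distrib algebra_simps)
    moreover have "tdvd (Suc M) (gamma 1 * (H_v1 - Hp M) - bb * ((H_v1 - Hp M) oo bb) - (1-varU)*(G yy (Suc M) - G yy M))"
      by (intro tdvd_diff tdvd_mult tdvd_compose tdvd_H_Hp G_diff bb0)
    ultimately show ?thesis using Suc by simp
  qed
  then have "?E = 0" by (rule tdvd_all)
  then show ?thesis by (simp add: algebra_simps)
qed





definition cc :: "nat \<Rightarrow> fps3" where "cc s = varZ*varT*(1-varU)*varU^s*(1-varT)^s"
definition DD :: "nat \<Rightarrow> fps3" where "DD s = delta s * (\<Prod>i\<in>{1..s+1}. gamma i)"
definition TT :: "nat \<Rightarrow> fps3" where "TT s = cc s * inverse (DD s)"

lemma prod_nth0: "(prod f A :: 'a::comm_semiring_1 fps) $ 0 = (\<Prod>i\<in>A. f i $ 0)"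
  by (induction A rule: infinite_finite_induct) auto

lemma delta_eq: "delta s = varU - (1-varT)^s*(varU-1)"
  by (simp add: delta_def)

lemma delta_0: "delta s $ 0 $ 0 $ 0 = 1"
  unfolding delta_eq by (simp add: fps_power_zeroth varU_def varT_def)
lemma gamma_0: "gamma s $ 0 $ 0 $ 0 = 1"
  unfolding gamma_def by (simp add: fps_power_zeroth varU_def varT_def varZ_def)

lemma DD_0: "DD s $ 0 $ 0 $ 0 = 1"
  by (simp add: DD_def prod_nth0 delta_0 gamma_0)

lemma DD_inv: "DD s * inverse (DD s) = 1" using unit3[of "DD s"] DD_0 by simp
lemma gamma1_inv: "gamma 1 * inverse (gamma 1) = 1" using unit3[of "gamma 1"] gamma_0 by simp

abbreviation sig :: "fps3 \<Rightarrow> fps3" where "sig X \<equiv> X oo bb"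

lemmas sig_simps = fps_compose_sub_distrib fps_compose_mult_distrib[OF bb0]
  fps_compose_power[OF bb0, symmetric] fps_compose_add_distrib

lemma sig_U: "sig varU = bb" by (simp add: varU_def bb0)
lemma sig_T: "sig varT = varT" by (simp add: varT_def)
lemma sig_Z: "sig varZ = varZ" by (simp add: varZ_def)

lemma yd: "yy * delta 1 = 1" by (rule yy_inv)
lemma bbd: "bb * delta 1 = varU" using yd by (simp add: bb_def mult.assoc)

lemma bbd': "bb * delta (Suc 0) = varU" using bbd by simp
lemma delta1': "delta (Suc 0) = 1 - varT*(1-varU)" using delta1 by simp

lemma sig_delta: "sig (delta s) * delta 1 = delta (Suc s)"
proof -
  let ?d = "delta 1" and ?P = "(1-varT)^s"
  have e: "sig (delta s) = bb - ?P*(bb - 1)" unfolding delta_eq by (simp add: sig_simps sig_U sig_T)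
  have "sig (delta s) * ?d = bb * ?d - ?P*(bb * ?d - ?d)" unfolding e by (simp add: algebra_simps)
  also have "\<dots> = varU - ?P*(varU - ?d)" by (simp add: bbd')
  also have "varU - ?d = (1-varT)*(varU-1)" by (simp add: delta1' algebra_simps)
  finally show ?thesis by (simp add: delta_eq algebra_simps)
qed

lemma sig_gamma: assumes "i \<ge> 1" shows "sig (gamma i) * delta 1 = gamma (Suc i)"
proof -
  let ?d = "delta 1" and ?P = "(1-varT)^(i-1)"
  have e: "sig (gamma i) = bb - (1 - varZ*varT)*?P*(bb - 1)" unfolding gamma_def
    by (simp add: sig_simps sig_U sig_T sig_Z)
  have "sig (gamma i) * ?d = bb * ?d - (1 - varZ*varT)*?P*(bb * ?d - ?d)" unfolding e by (simp add: algebra_simps)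
  also have "\<dots> = varU - (1 - varZ*varT)*?P*(varU - ?d)" by (simp add: bbd')
  also have "varU - ?d = (1-varT)*(varU-1)" by (simp add: delta1' algebra_simps)
  finally have X: "sig (gamma i) * ?d = varU - (1 - varZ*varT)*?P*((1-varT)*(varU-1))" .
  have g: "gamma (Suc i) = varU - (1 - varZ*varT)*((1-varT)*?P)*(varU-1)" using assms by (cases i) (auto simp: gamma_def)
  show ?thesis unfolding X g by (simp add: algebra_simps)
qed

lemma sig_inv: "sig (inverse (DD s)) * sig (DD s) = 1"
proof -
  have "sig (DD s * inverse (DD s)) = 1" by (simp add: DD_inv)
  then show ?thesis by (simp add: fps_compose_mult_distrib[OF bb0] mult.commute)
qed

lemma sig_DD: "sig (DD s) * delta 1 ^ (s+2) * gamma 1 = DD (Suc s)"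
proof -
  let ?d = "delta 1"
  have p: "sig (DD s) = sig (delta s) * (\<Prod>i\<in>{1..s+1}. sig (gamma i))"
    by (simp add: DD_def fps_compose_mult_distrib[OF bb0] fps_compose_prod_distrib[OF bb0])
  have "(\<Prod>i\<in>{1..s+1}. sig (gamma i)) * ?d ^ (s+1) = (\<Prod>i\<in>{1..s+1}. sig (gamma i) * ?d)"
    by (simp add: prod.distrib)
  also have "\<dots> = (\<Prod>i\<in>{1..s+1}. gamma (Suc i))"
    by (intro prod.cong refl sig_gamma) simp
  also have "\<dots> = (\<Prod>i\<in>{Suc 1..Suc (s+1)}. gamma i)"
    by (rule prod.shift_bounds_cl_Suc_ivl[symmetric])
  finally have q: "(\<Prod>i\<in>{1..s+1}. sig (gamma i)) * ?d ^ (s+1) = (\<Prod>i\<in>{Suc 1..Suc (s+1)}. gamma i)" .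
  have t: "(\<Prod>i\<in>{1..Suc (s+1)}. gamma i) = gamma 1 * (\<Prod>i\<in>{Suc 1..Suc (s+1)}. gamma i)"
    by (rule prod.atLeast_Suc_atMost) simp
  have "sig (DD s) * ?d ^ (s+2) * gamma 1
      = (sig (delta s) * ?d) * ((\<Prod>i\<in>{1..s+1}. sig (gamma i)) * ?d ^ (s+1)) * gamma 1"
    unfolding p by (simp add: ac_simps)
  also have "\<dots> = delta (Suc s) * (gamma 1 * (\<Prod>i\<in>{Suc 1..Suc (s+1)}. gamma i))"
    unfolding q sig_delta by (simp add: ac_simps)
  also have "\<dots> = DD (Suc s)" unfolding t[symmetric] DD_def by simp
  finally show ?thesis .
qed

lemma cc_step: "bb * sig (cc s) * delta 1 ^ (s+2) = cc (Suc s)"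
proof -
  let ?d = "delta 1"
  have e: "sig (cc s) = varZ*varT*(1-bb)*bb^s*(1-varT)^s"
    unfolding cc_def by (simp add: sig_simps sig_U sig_T sig_Z)
  have "bb * sig (cc s) * ?d ^ (s+2) = varZ*varT*(1-varT)^s * (bb*?d)^(s+1) * ((1-bb)*?d)"
    unfolding e by (simp add: power_mult_distrib ac_simps)
  also have "(1-bb)*?d = (1-varT)*(1-varU)"
  proof -
    have "(1-bb)*?d = ?d - bb*?d" by (simp add: algebra_simps)
    also have "\<dots> = ?d - varU" by (simp only: bbd)
    also have "\<dots> = (1-varT)*(1-varU)" by (simp add: delta1' algebra_simps)
    finally show ?thesis .
  qed
  also have "bb * ?d = varU" by (rule bbd)
  finally show ?thesis by (simp add: cc_def ac_simps)
qed

lemma TT_step: "TT (Suc s) * gamma 1 = bb * sig (TT s)"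
proof -
  let ?D = "DD (Suc s)"
  have L: "TT (Suc s) * gamma 1 * ?D = cc (Suc s) * gamma 1"
  proof -
    have "TT (Suc s) * gamma 1 * ?D = cc (Suc s) * gamma 1 * (?D * inverse ?D)" by (simp add: TT_def ac_simps)
    then show ?thesis by (simp add: DD_inv)
  qed
  have R: "bb * sig (TT s) * ?D = cc (Suc s) * gamma 1"
  proof -
    have "bb * sig (TT s) * ?D = (bb * sig (cc s) * delta 1^(s+2)) * (sig (inverse (DD s)) * sig (DD s)) * gamma 1"
      unfolding sig_DD[symmetric] TT_def by (simp add: fps_compose_mult_distrib[OF bb0] ac_simps)
    also have "\<dots> = cc (Suc s) * gamma 1" unfolding cc_step sig_inv by simp
    finally show ?thesis .
  qed
  have "TT (Suc s) * gamma 1 = TT (Suc s) * gamma 1 * ?D * inverse ?D" by (simp add: DD_inv mult.assoc)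
  also have "\<dots> = bb * sig (TT s) * ?D * inverse ?D" by (simp only: L R)
  also have "\<dots> = bb * sig (TT s)" by (simp add: DD_inv mult.assoc)
  finally show ?thesis .
qed

lemma TT0: "TT 0 * gamma 1 = varZ*varT*(1-varU)"
proof -
  have d: "DD 0 = gamma 1" by (simp add: DD_def delta_def)
  have "TT 0 * gamma 1 = cc 0 * (gamma 1 * inverse (gamma 1))" by (simp add: TT_def d ac_simps)
  also have "\<dots> = cc 0" by (simp only: gamma1_inv mult_1_right)
  finally show ?thesis by (simp add: cc_def)
qed

lemma S_step: "(\<Sum>s<Suc n. TT s) * gamma 1 = varZ*varT*(1-varU) + bb * sig (\<Sum>s<n. TT s)"
proof -
  have "(\<Sum>s<Suc n. TT s) * gamma 1 = TT 0 * gamma 1 + (\<Sum>s<n. TT (Suc s) * gamma 1)"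
    by (simp only: sum.lessThan_Suc_shift distrib_right sum_distrib_right)
  also have "\<dots> = varZ*varT*(1-varU) + bb * sig (\<Sum>s<n. TT s)"
    by (simp only: TT0 TT_step fps_compose_sum_distrib sum_distrib_left)
  finally show ?thesis .
qed

lemma E_div: "\<exists>R. H_v1 - (\<Sum>s<n. TT s) = fps_X ^ n * R"
proof (induction n)
  case 0 then show ?case by simp
next
  case (Suc n)
  then obtain R where R: "H_v1 - (\<Sum>s<n. TT s) = fps_X ^ n * R" by blast
  let ?E = "H_v1 - (\<Sum>s<Suc n. TT s)"
  have "?E * gamma 1 = H_v1 * gamma 1 - (\<Sum>s<Suc n. TT s) * gamma 1" by (rule left_diff_distrib)
  also have "\<dots> = (varZ*varT*(1-varU) + bb*sig H_v1) - (varZ*varT*(1-varU) + bb * sig (\<Sum>s<n. TT s))"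
    by (simp only: H_FE S_step)
  also have "\<dots> = bb * sig (H_v1 - (\<Sum>s<n. TT s))" by (simp add: fps_compose_sub_distrib algebra_simps)
  also have "\<dots> = bb * (bb ^ n * sig R)" unfolding R
    by (simp add: fps_compose_mult_distrib[OF bb0] fps_compose_power[OF bb0, symmetric] bb0)
  also have "\<dots> = fps_X ^ Suc n * (yy ^ Suc n * sig R)"
    by (simp add: bb_def varU_def power_mult_distrib ac_simps)
  finally have e: "?E * gamma 1 = fps_X ^ Suc n * (yy ^ Suc n * sig R)" .
  have "?E = ?E * gamma 1 * inverse (gamma 1)" by (simp only: mult.assoc gamma1_inv mult_1_right)
  also have "\<dots> = fps_X ^ Suc n * (yy ^ Suc n * sig R * inverse (gamma 1))" unfolding e by (simp add: ac_simps)
  finally show ?case by blast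
qed

lemma S_tendsto: "(\<lambda>n. \<Sum>s<n. TT s) \<longlonglongrightarrow> H_v1"
proof (rule metric_LIMSEQ_I)
  fix r :: real assume r: "0 < r"
  obtain N where N: "(1/2::real) ^ N < r" using real_arch_pow_inv[OF r, of "1/2"] by auto
  have "\<forall>n\<ge>N. dist (\<Sum>s<n. TT s) H_v1 < r"
  proof (intro allI impI)
    fix n assume n: "n \<ge> N"
    obtain R where R: "H_v1 - (\<Sum>s<n. TT s) = fps_X ^ n * R" using E_div by blast
    show "dist (\<Sum>s<n. TT s) H_v1 < r"
    proof (cases "(\<Sum>s<n. TT s) = H_v1")
      case True then show ?thesis using r by simp
    next
      case False
      let ?F = "(\<Sum>s<n. TT s) - H_v1"
      have F: "?F = fps_X ^ n * (- R)" using R by (simp add: algebra_simps)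
      have Fne: "?F \<noteq> 0" using False by simp
      have "subdegree ?F \<ge> n"
        by (rule subdegree_geI[OF Fne]) (simp add: F fps_X_power_mult_nth)
      then have "inverse ((2::real) ^ subdegree ?F) \<le> inverse (2 ^ n)"
        by (intro le_imp_inverse_le power_increasing) auto
      also have "\<dots> = (1/2::real) ^ n" by (simp add: power_one_over inverse_eq_divide)
      also have "\<dots> \<le> (1/2) ^ N" using n by (intro power_decreasing) auto
      finally show ?thesis using N False by (simp add: dist_fps_def)
    qed
  qed
  then show "\<exists>no. \<forall>n\<ge>no. dist (\<Sum>s<n. TT s) H_v1 < r" by blast
qed

theorem theorem6:
  shows "(\<lambda>s. varZ * varT * (1 - varU) * varU ^ s * (1 - varT) ^ s
            * inverse (delta s * (\<Prod>i\<in>{1..s+1}. gamma i))) sums H_v1"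
proof -
  have "(\<lambda>s. varZ * varT * (1 - varU) * varU ^ s * (1 - varT) ^ s
            * inverse (delta s * (\<Prod>i\<in>{1..s+1}. gamma i))) = TT"
    by (auto simp: TT_def cc_def DD_def)
  then show ?thesis using S_tendsto by (simp add: sums_def)
qed


end
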